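(* In any finite ELP, let $Q\in\mathcal Q$ and let $\pi$ be a policy. Put $\rho_\pi(s,a)=\rho_\pi(s)\pi(a|s)$ and $\lambda_\pi(s,a)=\rho_\pi(s,a)\mathbb E_\pi[T]$. Then $$\mathcal L_\pi(Q,\bar\lambda)\le\mathcal L_\pi(Q,\lambda_\pi)\le\mathcal L_\pi(\bar Q,\lambda_\pi)\quad\text{for all }\bar Q\in\mathcal Q,\ \bar\lambda\ge0$$ if and only if all of the following hold: (1) $\mathcal BQ(s,a)-Q(s,a)\le0$ for all $(s,a)\in\mathcal S\times\mathcal A$; (2) $\rho_\pi(s,a)\big(\mathcal BQ(s,a)-Q(s,a)\big)=0$ for all $(s,a)$; (3) $\rho_\pi(s,a)\big(\max_{\bar a}Q(s,\bar a)-Q(s,a)\big)=0$ for all $s\notin\mathcal S_\bot$ and all $a\in\mathcal A$.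
   Context: A finite ELP is $(\mathcal S,\mathcal A,P,R,\rho)$ with finite $\mathcal S,\mathcal A$, reward $R:\mathcal S\to\mathbb R$, transitions $P(s'|s,a)$, distribution $\rho$, and nonempty terminal set $\mathcal S_\bot$. Under a policy $\pi$, $S_0$ is a fixed terminal state, $A_t\sim\pi(\cdot|S_t)$, $S_{t+1}\sim P(\cdot|S_t,A_t)$, and $T=\inf\{t\ge1:S_t\in\mathcal S_\bot\}$. ELP conditions: $\mathbb E_\pi[T]<\infty$ for every $\pi$; $P(s'|s,a)=\rho(s')$ for all $s\in\mathcal S_\bot$, all $a,s'$; every state is reachable under some policy. $\mathcal Q$ = all functions $\mathcal S\times\mathcal A\to\mathbb R$; $\bar\lambda\ge0$ ranges over functions $\mathcal S\times\mathcal A\to[0,\infty)$. $\mathcal BQ(s,a)=\sum_{s'}P(s'|s,a)\big(R(s')+\mathbf 1[s'\notin\mathcal S_\bot]\max_{a'}Q(s',a')\big)$. $\mathcal L_\pi(Q,\lambda)=\mathbb E_\pi[Q(S_T,A_T)]+\sum_{s,a}\lambda(s,a)(\mathcal BQ(s,a)-Q(s,a))$ with $A_T\sim\pi(\cdot|S_T)$. $\rho_\pi(s)$ is the unique stationary distribution of the Markov chain on $\mathcal S$ with kernel $\sum_aP(s'|s,a)\pi(a|s)$. *)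

theory Defs
  imports Complex_Main
begin

text \<open>Finite ELP: states 's, actions 'a (finite types).
  P s a s' = P(s'|s,a); policies pol s a = pol(a|s); Sbot the terminal set;
  s0 the fixed terminal start state S_0.\<close>

definition stoch_policy :: "('s::finite \<Rightarrow> 'a::finite \<Rightarrow> real) \<Rightarrow> bool" where
  "stoch_policy pol \<longleftrightarrow> (\<forall>s a. 0 \<le> pol s a) \<and> (\<forall>s. (\<Sum>a\<in>UNIV. pol s a) = 1)"

definition kernel_pi :: "('s::finite \<Rightarrow> 'a::finite \<Rightarrow> 's \<Rightarrow> real) \<Rightarrow> ('s \<Rightarrow> 'a \<Rightarrow> real) \<Rightarrow> 's \<Rightarrow> 's \<Rightarrow> real" where
  "kernel_pi P pol s s' = (\<Sum>a\<in>UNIV. P s a s' * pol s a)"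

text \<open>state_prob: P_pi(S_n = s) for the (restarting) process started at s0.\<close>
fun state_prob :: "('s::finite \<Rightarrow> 'a::finite \<Rightarrow> 's \<Rightarrow> real) \<Rightarrow> ('s \<Rightarrow> 'a \<Rightarrow> real) \<Rightarrow> 's \<Rightarrow> nat \<Rightarrow> 's \<Rightarrow> real" where
  "state_prob P pol s0 0 s = (if s = s0 then 1 else 0)"
| "state_prob P pol s0 (Suc n) s' = (\<Sum>s\<in>UNIV. state_prob P pol s0 n s * kernel_pi P pol s s')"

text \<open>surv: P_pi(S_n = s and S_t \<notin> Sbot for all 1 \<le> t < n).\<close>
fun surv :: "('s::finite \<Rightarrow> 'a::finite \<Rightarrow> 's \<Rightarrow> real) \<Rightarrow> 's set \<Rightarrow> ('s \<Rightarrow> 'a \<Rightarrow> real) \<Rightarrow> 's \<Rightarrow> nat \<Rightarrow> 's \<Rightarrow> real" where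
  "surv P Sbot pol s0 0 s = (if s = s0 then 1 else 0)"
| "surv P Sbot pol s0 (Suc n) s' =
     (\<Sum>s\<in>UNIV. (if n = 0 \<or> s \<notin> Sbot then surv P Sbot pol s0 n s else 0) * kernel_pi P pol s s')"

text \<open>hit_prob n s = P_pi(T = n and S_T = s), T = inf{t \<ge> 1. S_t \<in> Sbot}.\<close>
definition hit_prob :: "('s::finite \<Rightarrow> 'a::finite \<Rightarrow> 's \<Rightarrow> real) \<Rightarrow> 's set \<Rightarrow> ('s \<Rightarrow> 'a \<Rightarrow> real) \<Rightarrow> 's \<Rightarrow> nat \<Rightarrow> 's \<Rightarrow> real" where
  "hit_prob P Sbot pol s0 n s = (if 1 \<le> n \<and> s \<in> Sbot then surv P Sbot pol s0 n s else 0)"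

definition finite_exp_T :: "('s::finite \<Rightarrow> 'a::finite \<Rightarrow> 's \<Rightarrow> real) \<Rightarrow> 's set \<Rightarrow> ('s \<Rightarrow> 'a \<Rightarrow> real) \<Rightarrow> 's \<Rightarrow> bool" where
  "finite_exp_T P Sbot pol s0 \<longleftrightarrow>
     summable (\<lambda>n. real n * (\<Sum>s\<in>UNIV. hit_prob P Sbot pol s0 n s)) \<and>
     (\<Sum>n. \<Sum>s\<in>UNIV. hit_prob P Sbot pol s0 n s) = 1"

definition exp_T :: "('s::finite \<Rightarrow> 'a::finite \<Rightarrow> 's \<Rightarrow> real) \<Rightarrow> 's set \<Rightarrow> ('s \<Rightarrow> 'a \<Rightarrow> real) \<Rightarrow> 's \<Rightarrow> real" where
  "exp_T P Sbot pol s0 = (\<Sum>n. real n * (\<Sum>s\<in>UNIV. hit_prob P Sbot pol s0 n s))"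

text \<open>E_pi[Q(S_T, A_T)] with A_T ~ pol(.|S_T).\<close>
definition exp_Q_T :: "('s::finite \<Rightarrow> 'a::finite \<Rightarrow> 's \<Rightarrow> real) \<Rightarrow> 's set \<Rightarrow> ('s \<Rightarrow> 'a \<Rightarrow> real) \<Rightarrow> 's \<Rightarrow> ('s \<Rightarrow> 'a \<Rightarrow> real) \<Rightarrow> real" where
  "exp_Q_T P Sbot pol s0 Q = (\<Sum>n. \<Sum>s\<in>UNIV. hit_prob P Sbot pol s0 n s * (\<Sum>a\<in>UNIV. pol s a * Q s a))"

definition elp :: "('s::finite \<Rightarrow> 'a::finite \<Rightarrow> 's \<Rightarrow> real) \<Rightarrow> ('s \<Rightarrow> real) \<Rightarrow> 's set \<Rightarrow> 's \<Rightarrow> bool" where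
  "elp P rho Sbot s0 \<longleftrightarrow>
     (\<forall>s a s'. 0 \<le> P s a s') \<and> (\<forall>s a. (\<Sum>s'\<in>UNIV. P s a s') = 1) \<and>
     (\<forall>s. 0 \<le> rho s) \<and> (\<Sum>s\<in>UNIV. rho s) = 1 \<and>
     Sbot \<noteq> {} \<and> s0 \<in> Sbot \<and>
     (\<forall>pol. stoch_policy pol \<longrightarrow> finite_exp_T P Sbot pol s0) \<and>
     (\<forall>s\<in>Sbot. \<forall>a s'. P s a s' = rho s') \<and>
     (\<forall>s. \<exists>pol n. stoch_policy pol \<and> 0 < state_prob P pol s0 n s)"

definition bellman :: "('s::finite \<Rightarrow> 'a::finite \<Rightarrow> 's \<Rightarrow> real) \<Rightarrow> ('s \<Rightarrow> real) \<Rightarrow> 's set \<Rightarrow> ('s \<Rightarrow> 'a \<Rightarrow> real) \<Rightarrow> 's \<Rightarrow> 'a \<Rightarrow> real" where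
  "bellman P R Sbot Q s a =
     (\<Sum>s'\<in>UNIV. P s a s' * (R s' + (if s' \<notin> Sbot then Max (range (Q s')) else 0)))"

definition lagr :: "('s::finite \<Rightarrow> 'a::finite \<Rightarrow> 's \<Rightarrow> real) \<Rightarrow> ('s \<Rightarrow> real) \<Rightarrow> 's set \<Rightarrow> 's \<Rightarrow> ('s \<Rightarrow> 'a \<Rightarrow> real)
     \<Rightarrow> ('s \<Rightarrow> 'a \<Rightarrow> real) \<Rightarrow> ('s \<Rightarrow> 'a \<Rightarrow> real) \<Rightarrow> real" where
  "lagr P R Sbot s0 pol Q lam = exp_Q_T P Sbot pol s0 Q +
     (\<Sum>s\<in>UNIV. \<Sum>a\<in>UNIV. lam s a * (bellman P R Sbot Q s a - Q s a))"

definition stat_dist :: "('s::finite \<Rightarrow> 'a::finite \<Rightarrow> 's \<Rightarrow> real) \<Rightarrow> ('s \<Rightarrow> 'a \<Rightarrow> real) \<Rightarrow> 's \<Rightarrow> real" where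
  "stat_dist P pol = (THE d. (\<forall>s. 0 \<le> d s) \<and> (\<Sum>s\<in>UNIV. d s) = 1 \<and>
       (\<forall>s'. d s' = (\<Sum>s\<in>UNIV. d s * kernel_pi P pol s s')))"

end

theory Submission
  imports Defs
begin


locale elpc =
  fixes P :: "'s::finite \<Rightarrow> 'a::finite \<Rightarrow> 's \<Rightarrow> real"
    and rho :: "'s \<Rightarrow> real" and Sbot :: "'s set" and s0 :: 's
  assumes E: "elp P rho Sbot s0"
begin

lemma E1: "\<forall>s a s'. 0 \<le> P s a s'" using E unfolding elp_def by (elim conjE) assumption
lemma E2: "\<forall>s a. (\<Sum>s'\<in>UNIV. P s a s') = 1" using E unfolding elp_def by (elim conjE) assumption
lemma E3: "\<forall>s. 0 \<le> rho s" using E unfolding elp_def by (elim conjE) assumption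
lemma rho_sum: "(\<Sum>s\<in>UNIV. rho s) = 1" using E unfolding elp_def by (elim conjE) assumption
lemma s0_bot: "s0 \<in> Sbot" using E unfolding elp_def by (elim conjE) assumption
lemma E6: "\<forall>pol. stoch_policy pol \<longrightarrow> finite_exp_T P Sbot pol s0" using E unfolding elp_def by (elim conjE) assumption
lemma E7: "\<forall>s\<in>Sbot. \<forall>a s'. P s a s' = rho s'" using E unfolding elp_def by (elim conjE) assumption
lemma E8: "\<forall>s. \<exists>pol n. stoch_policy pol \<and> 0 < state_prob P pol s0 n s" using E unfolding elp_def by (elim conjE) assumption
lemma P_nonneg: "0 \<le> P s a s'" using E1 by blast
lemma P_sum: "(\<Sum>s'\<in>UNIV. P s a s') = 1" using E2 by blast
lemma P_bot: "s \<in> Sbot \<Longrightarrow> P s a s' = rho s'" using E7 by blast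
lemma rho_nonneg: "0 \<le> rho s" using E3 by blast
lemma fin_T: "stoch_policy q \<Longrightarrow> finite_exp_T P Sbot q s0" using E6 by blast
lemma reach: "\<exists>q n. stoch_policy q \<and> 0 < state_prob P q s0 n s" using E8 by blast

lemma K_nonneg: "stoch_policy q \<Longrightarrow> 0 \<le> kernel_pi P q s s'"
  unfolding kernel_pi_def stoch_policy_def by (auto intro!: sum_nonneg simp: P_nonneg)

lemma K_sum: "stoch_policy q \<Longrightarrow> (\<Sum>s'\<in>UNIV. kernel_pi P q s s') = 1"
proof -
  assume q: "stoch_policy q"
  have "(\<Sum>s'\<in>UNIV. kernel_pi P q s s') = (\<Sum>a\<in>UNIV. \<Sum>s'\<in>UNIV. P s a s' * q s a)"
    unfolding kernel_pi_def by (rule sum.swap)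
  also have "\<dots> = (\<Sum>a\<in>UNIV. (\<Sum>s'\<in>UNIV. P s a s') * q s a)"
    by (simp only: sum_distrib_right)
  also have "\<dots> = 1" using q by (simp add: P_sum stoch_policy_def)
  finally show ?thesis .
qed

lemma K_bot: "stoch_policy q \<Longrightarrow> s \<in> Sbot \<Longrightarrow> kernel_pi P q s s' = rho s'"
  unfolding kernel_pi_def stoch_policy_def by (simp add: P_bot flip: sum_distrib_left)

lemma surv_nonneg: "stoch_policy q \<Longrightarrow> 0 \<le> surv P Sbot q s0 n s"
  by (induction n arbitrary: s) (auto intro!: sum_nonneg mult_nonneg_nonneg K_nonneg)

lemma surv_1: "stoch_policy q \<Longrightarrow> surv P Sbot q s0 (Suc 0) s = rho s"
proof -
  assume q: "stoch_policy q"
  have "surv P Sbot q s0 (Suc 0) s = (\<Sum>x\<in>UNIV. (if x = s0 then kernel_pi P q s0 s else 0))"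
    by (simp only: surv.simps) (rule sum.cong, auto)
  also have "\<dots> = rho s" using K_bot[OF q s0_bot] by simp
  finally show ?thesis .
qed

lemma surv_SS: "surv P Sbot q s0 (Suc (Suc n)) s' =
   (\<Sum>s\<in>UNIV. surv P Sbot q s0 (Suc n) s * (if s \<in> Sbot then 0 else kernel_pi P q s s'))"
  by (simp only: surv.simps(2)[where n="Suc n"]) (rule sum.cong, auto simp del: surv.simps)

lemma sum_split_bot: "(\<Sum>s\<in>UNIV. f s) = (\<Sum>s\<in>Sbot. f s) + (\<Sum>s\<in>UNIV. (if s \<in> Sbot then 0 else f s))"
proof -
  have "(\<Sum>s\<in>UNIV. f s) = (\<Sum>s\<in>UNIV. (if s \<in> Sbot then f s else 0) + (if s \<in> Sbot then 0 else f s))"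
    by (rule sum.cong) auto
  also have "\<dots> = (\<Sum>s\<in>UNIV. (if s \<in> Sbot then f s else 0)) + (\<Sum>s\<in>UNIV. (if s \<in> Sbot then 0 else f s))"
    by (rule sum.distrib)
  also have "(\<Sum>s\<in>UNIV. (if s \<in> Sbot then f s else 0)) = (\<Sum>s\<in>Sbot. f s)"
    using sum.inter_restrict[of UNIV f Sbot] by simp
  finally show ?thesis .
qed

declare surv.simps[simp del]

lemma sum_bot_if: "(\<Sum>s\<in>UNIV. if s \<in> Sbot then f s else 0) = sum f Sbot"
  using sum.inter_restrict[of UNIV f Sbot] by simp

definition "am q n = (\<Sum>s\<in>UNIV. surv P Sbot q s0 (Suc n) s)"
definition "hm q n = (\<Sum>s\<in>Sbot. surv P Sbot q s0 (Suc n) s)"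

lemma am0: "stoch_policy q \<Longrightarrow> am q 0 = 1"
  by (simp add: am_def surv_1 rho_sum)

lemma am_Suc: "stoch_policy q \<Longrightarrow> am q (Suc n) = am q n - hm q n"
proof -
  assume q: "stoch_policy q"
  let ?f = "\<lambda>s. surv P Sbot q s0 (Suc n) s"
  have "am q (Suc n) = (\<Sum>s'\<in>UNIV. \<Sum>s\<in>UNIV. ?f s * (if s \<in> Sbot then 0 else kernel_pi P q s s'))"
    unfolding am_def by (rule sum.cong) (simp_all only: surv_SS)
  also have "\<dots> = (\<Sum>s\<in>UNIV. ?f s * (\<Sum>s'\<in>UNIV. (if s \<in> Sbot then 0 else kernel_pi P q s s')))"
    by (subst sum.swap) (simp only: sum_distrib_left)
  also have "\<dots> = (\<Sum>s\<in>UNIV. (if s \<in> Sbot then 0 else ?f s))"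
    by (rule sum.cong) (auto simp: K_sum q)
  also have "\<dots> = am q n - hm q n"
    unfolding am_def hm_def using sum_split_bot[of ?f] by simp
  finally show ?thesis .
qed

lemma hm_nonneg: "stoch_policy q \<Longrightarrow> 0 \<le> hm q n"
  unfolding hm_def by (auto intro!: sum_nonneg surv_nonneg)
lemma am_nonneg: "stoch_policy q \<Longrightarrow> 0 \<le> am q n"
  unfolding am_def by (auto intro!: sum_nonneg surv_nonneg)

lemma am_partial: "stoch_policy q \<Longrightarrow> (\<Sum>k<n. hm q k) = 1 - am q n"
  by (induction n) (auto simp: am0 am_Suc)

lemma H_eq: "(\<Sum>s\<in>UNIV. hit_prob P Sbot q s0 n s) = (if n = 0 then 0 else hm q (n - 1))"
proof (cases n)
  case 0 then show ?thesis by (simp add: hit_prob_def)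
next
  case (Suc m)
  have "(\<Sum>s\<in>UNIV. hit_prob P Sbot q s0 n s) = (\<Sum>s\<in>UNIV. if s \<in> Sbot then surv P Sbot q s0 (Suc m) s else 0)"
    unfolding hit_prob_def Suc by (rule sum.cong) auto
  also have "\<dots> = hm q m" unfolding hm_def by (rule sum_bot_if)
  finally show ?thesis using Suc by simp
qed

lemma hm_facts: assumes q: "stoch_policy q"
  shows "summable (\<lambda>n. real (Suc n) * hm q n)" "summable (hm q)" "suminf (hm q) = 1"
    "exp_T P Sbot q s0 = (\<Sum>n. real (Suc n) * hm q n)"
proof -
  let ?H = "\<lambda>n. (\<Sum>s\<in>UNIV. hit_prob P Sbot q s0 n s)"
  have F: "summable (\<lambda>n. real n * ?H n)" "suminf ?H = 1" using fin_T[OF q] unfolding finite_exp_T_def by auto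
  have HS: "\<And>n. ?H (Suc n) = hm q n" by (simp add: H_eq)
  have H0: "?H 0 = 0" by (simp add: H_eq)
  show s1: "summable (\<lambda>n. real (Suc n) * hm q n)"
    using F(1) summable_Suc_iff[of "\<lambda>n. real n * ?H n"] HS by simp
  have "summable ?H"
  proof (rule summable_comparison_test[OF _ F(1)])
    show "\<exists>N. \<forall>n\<ge>N. norm (?H n) \<le> real n * ?H n"
    proof (rule exI[of _ 0], intro allI impI)
      fix n :: nat
      have aux: "\<And>x::real. 0 < n \<Longrightarrow> 0 \<le> x \<Longrightarrow> x \<le> real n * x"
        using mult_right_mono[of 1 "real n"] by fastforce
      show "norm (?H n) \<le> real n * ?H n"
        using aux hm_nonneg[OF q] by (simp add: H_eq)
    qed
  qed
  then show s2: "summable (hm q)" using summable_Suc_iff[of ?H] HS by simp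
  have "suminf (hm q) = suminf ?H - ?H 0"
    using suminf_split_head[OF \<open>summable ?H\<close>] HS by simp
  then show "suminf (hm q) = 1" using F H0 by simp
  have "exp_T P Sbot q s0 = (\<Sum>n. real (Suc n) * ?H (Suc n))"
    unfolding exp_T_def using suminf_split_head[OF F(1)] by simp
  then show "exp_T P Sbot q s0 = (\<Sum>n. real (Suc n) * hm q n)" using HS by simp
qed

end



locale elpp = elpc P rho Sbot s0 for P :: "'s::finite \<Rightarrow> 'a::finite \<Rightarrow> 's \<Rightarrow> real"
  and rho Sbot s0 +
  fixes pol :: "'s \<Rightarrow> 'a \<Rightarrow> real"
  assumes pol: "stoch_policy pol"
begin

abbreviation "hh \<equiv> hm pol"
abbreviation "aa \<equiv> am pol"
abbreviation "ET \<equiv> exp_T P Sbot pol s0"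
abbreviation "ff \<equiv> (\<lambda>n. real (Suc n) * hh n)"

lemma hh_summ: "summable hh" "suminf hh = 1" "summable ff" "ET = suminf ff"
  using hm_facts[OF pol] by auto

lemma hh_nonneg: "0 \<le> hh n" by (rule hm_nonneg[OF pol])
lemma aa_nonneg: "0 \<le> aa n" by (rule am_nonneg[OF pol])

lemma aa_tail: "aa n = (\<Sum>k. hh (k + n))"
proof (induction n)
  case 0 then show ?case using hh_summ am0[OF pol] by simp
next
  case (Suc n)
  have sm: "summable (\<lambda>k. hh (k + n))" using hh_summ(1) by simp
  have "aa (Suc n) = (\<Sum>k. hh (k + n)) - hh n" using Suc am_Suc[OF pol] by simp
  also have "\<dots> = (\<Sum>k. hh (Suc k + n))" using suminf_split_head[OF sm] by simp
  finally show ?case by simp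
qed

lemma aa_partial: "(\<Sum>n<N. aa n) = (\<Sum>n<N. ff n) + real N * aa N"
  by (induction N) (simp_all add: am_Suc[OF pol] algebra_simps)

lemma Naa: "real N * aa N \<le> (\<Sum>k. ff (k + N))"
proof -
  have sm: "summable (\<lambda>k. hh (k + N))" using hh_summ(1) by simp
  have sm2: "summable (\<lambda>k. ff (k + N))" by (rule iffD2[OF summable_iff_shift[of ff N] hh_summ(3)])
  have "real N * aa N = (\<Sum>k. real N * hh (k + N))" using aa_tail suminf_mult[OF sm] by simp
  also have "\<dots> \<le> (\<Sum>k. ff (k + N))"
    apply (rule suminf_le)
    subgoal by (rule mult_right_mono[OF _ hh_nonneg]) simp
    subgoal by (rule summable_mult[OF sm])
    subgoal by (rule sm2)
    done
  finally show ?thesis .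
qed

lemma aa_bound: "(\<Sum>n<N. aa n) \<le> ET"
proof -
  have "(\<Sum>n<N. aa n) \<le> (\<Sum>n<N. ff n) + (\<Sum>k. ff (k + N))" using aa_partial Naa by simp
  also have "\<dots> = ET" using suminf_split_initial_segment[OF hh_summ(3), of N] hh_summ(4) by simp
  finally show ?thesis .
qed

lemma aa_summ: "summable aa"
proof (rule bounded_imp_summable[where B=ET])
  fix n show "0 \<le> aa n" by (rule aa_nonneg)
  show "(\<Sum>k\<le>n. aa k) \<le> ET" using aa_bound[of "Suc n"] by (simp add: lessThan_Suc_atMost)
qed

lemma aa_sum: "suminf aa = ET"
proof (rule antisym)
  show "suminf aa \<le> ET" by (rule suminf_le_const[OF aa_summ aa_bound])
  show "ET \<le> suminf aa" unfolding hh_summ(4)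
  proof (rule suminf_le_const[OF hh_summ(3)])
    fix N
    have "(\<Sum>n<N. ff n) \<le> (\<Sum>n<N. aa n)" using aa_partial[of N] aa_nonneg[of N] by simp
    also have "\<dots> \<le> suminf aa" using sum_le_suminf[OF aa_summ, of "{..<N}"] aa_nonneg by simp
    finally show "(\<Sum>n<N. ff n) \<le> suminf aa" .
  qed
qed

lemma ET_ge1: "1 \<le> ET"
proof -
  have "suminf hh \<le> suminf ff"
  proof (rule suminf_le[OF _ hh_summ(1) hh_summ(3)])
    fix n show "hh n \<le> ff n" using mult_right_mono[of 1 "real (Suc n)" "hh n"] hh_nonneg[of n] by simp
  qed
  then show ?thesis using hh_summ by simp
qed

definition nu :: "'s \<Rightarrow> real" where "nu s = (\<Sum>n. surv P Sbot pol s0 (Suc n) s)"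

lemma surv_le_aa: "surv P Sbot pol s0 (Suc n) s \<le> aa n"
  unfolding am_def by (rule member_le_sum) (auto intro: surv_nonneg[OF pol])

lemma surv_summ: "summable (\<lambda>n. surv P Sbot pol s0 (Suc n) s)"
  by (rule summable_comparison_test[OF _ aa_summ]) (auto simp: surv_nonneg[OF pol] surv_le_aa)

lemma nu_nonneg: "0 \<le> nu s"
  unfolding nu_def by (rule suminf_nonneg[OF surv_summ]) (simp add: surv_nonneg[OF pol])

lemma nu_total: "(\<Sum>s\<in>UNIV. nu s) = ET"
proof -
  have "(\<Sum>s\<in>UNIV. nu s) = (\<Sum>n. \<Sum>s\<in>UNIV. surv P Sbot pol s0 (Suc n) s)"
    unfolding nu_def by (rule suminf_sum[symmetric]) (rule surv_summ)
  also have "\<dots> = suminf aa" unfolding am_def by simp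
  finally show ?thesis using aa_sum by simp
qed

lemma nu_bot: "(\<Sum>s\<in>Sbot. nu s) = 1"
proof -
  have "(\<Sum>s\<in>Sbot. nu s) = (\<Sum>n. \<Sum>s\<in>Sbot. surv P Sbot pol s0 (Suc n) s)"
    unfolding nu_def by (rule suminf_sum[symmetric]) (rule surv_summ)
  also have "\<dots> = suminf hh" unfolding hm_def by simp
  finally show ?thesis using hh_summ by simp
qed

lemma nu_stat: "nu s' = (\<Sum>s\<in>UNIV. nu s * kernel_pi P pol s s')"
proof -
  let ?c = "\<lambda>s. (if s \<in> Sbot then 0 else kernel_pi P pol s s')"
  have "nu s' = surv P Sbot pol s0 (Suc 0) s' + (\<Sum>n. surv P Sbot pol s0 (Suc (Suc n)) s')"
    unfolding nu_def using suminf_split_head[OF surv_summ[of s']] by simp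
  also have "(\<Sum>n. surv P Sbot pol s0 (Suc (Suc n)) s') =
      (\<Sum>n. \<Sum>s\<in>UNIV. surv P Sbot pol s0 (Suc n) s * ?c s)"
    by (simp only: surv_SS)
  also have "\<dots> = (\<Sum>s\<in>UNIV. \<Sum>n. surv P Sbot pol s0 (Suc n) s * ?c s)"
    by (rule suminf_sum) (rule summable_mult2[OF surv_summ])
  also have "\<dots> = (\<Sum>s\<in>UNIV. nu s * ?c s)"
    unfolding nu_def by (rule sum.cong[OF refl]) (rule suminf_mult2[OF surv_summ, symmetric])
  finally have 1: "nu s' = rho s' + (\<Sum>s\<in>UNIV. nu s * ?c s)" using surv_1[OF pol] by simp
  have "(\<Sum>s\<in>UNIV. nu s * kernel_pi P pol s s') =
      (\<Sum>s\<in>UNIV. (if s \<in> Sbot then nu s * rho s' else 0) + nu s * ?c s)"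
    by (rule sum.cong) (auto simp: K_bot[OF pol])
  also have "\<dots> = (\<Sum>s\<in>UNIV. (if s \<in> Sbot then nu s * rho s' else 0)) + (\<Sum>s\<in>UNIV. nu s * ?c s)"
    by (rule sum.distrib)
  also have "(\<Sum>s\<in>UNIV. (if s \<in> Sbot then nu s * rho s' else 0)) = (\<Sum>s\<in>Sbot. nu s) * rho s'"
    by (simp add: sum_bot_if sum_distrib_right)
  finally show ?thesis using 1 nu_bot by simp
qed

lemma hit_sums: "(\<lambda>n. hit_prob P Sbot pol s0 n s) sums (if s \<in> Sbot then nu s else 0)"
proof -
  have "(\<lambda>n. hit_prob P Sbot pol s0 (Suc n) s) sums (if s \<in> Sbot then nu s else 0)"
  proof (cases "s \<in> Sbot")
    case True
    then show ?thesis unfolding hit_prob_def nu_def using summable_sums[OF surv_summ[of s]] by simp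
  next
    case False
    then show ?thesis unfolding hit_prob_def by simp
  qed
  then show ?thesis using sums_Suc_iff[of "\<lambda>n. hit_prob P Sbot pol s0 n s"] by (simp add: hit_prob_def)
qed

lemma expQ: "exp_Q_T P Sbot pol s0 Qb =
   (\<Sum>s\<in>UNIV. (if s \<in> Sbot then nu s * (\<Sum>a\<in>UNIV. pol s a * Qb s a) else 0))"
proof -
  have "(\<lambda>n. \<Sum>s\<in>UNIV. hit_prob P Sbot pol s0 n s * (\<Sum>a\<in>UNIV. pol s a * Qb s a)) sums
     (\<Sum>s\<in>UNIV. (if s \<in> Sbot then nu s else 0) * (\<Sum>a\<in>UNIV. pol s a * Qb s a))"
    by (rule sums_sum) (rule sums_mult2[OF hit_sums])
  then have "exp_Q_T P Sbot pol s0 Qb = (\<Sum>s\<in>UNIV. (if s \<in> Sbot then nu s else 0) * (\<Sum>a\<in>UNIV. pol s a * Qb s a))"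
    unfolding exp_Q_T_def by (rule sums_unique[symmetric])
  also have "\<dots> = (\<Sum>s\<in>UNIV. (if s \<in> Sbot then nu s * (\<Sum>a\<in>UNIV. pol s a * Qb s a) else 0))"
    by (rule sum.cong) auto
  finally show ?thesis .
qed


lemma K_split: "(\<Sum>s\<in>UNIV. f s * kernel_pi P pol s s') =
   (\<Sum>s\<in>Sbot. f s) * rho s' + (\<Sum>s\<in>UNIV. f s * (if s \<in> Sbot then 0 else kernel_pi P pol s s'))"
proof -
  have "(\<Sum>s\<in>UNIV. f s * kernel_pi P pol s s') =
      (\<Sum>s\<in>UNIV. (if s \<in> Sbot then f s * rho s' else 0) + f s * (if s \<in> Sbot then 0 else kernel_pi P pol s s'))"
    by (rule sum.cong) (auto simp: K_bot[OF pol])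
  also have "\<dots> = (\<Sum>s\<in>UNIV. (if s \<in> Sbot then f s * rho s' else 0)) + (\<Sum>s\<in>UNIV. f s * (if s \<in> Sbot then 0 else kernel_pi P pol s s'))"
    by (rule sum.distrib)
  also have "(\<Sum>s\<in>UNIV. (if s \<in> Sbot then f s * rho s' else 0)) = (\<Sum>s\<in>Sbot. f s) * rho s'"
    by (simp add: sum_bot_if sum_distrib_right)
  finally show ?thesis .
qed

lemma lower:
  assumes mu0: "\<forall>s. 0 \<le> mu s"
    and st: "\<forall>s'. mu s' = (\<Sum>s\<in>UNIV. mu s * kernel_pi P pol s s')"
  shows "(\<Sum>s\<in>Sbot. mu s) * (\<Sum>k<n. surv P Sbot pol s0 (Suc k) s') \<le> mu s'"
proof (induction n arbitrary: s')
  case 0 show ?case using mu0 by simp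
next
  case (Suc n)
  let ?m = "\<Sum>s\<in>Sbot. mu s"
  let ?c = "\<lambda>s. if s \<in> Sbot then 0 else kernel_pi P pol s s'"
  let ?X = "\<lambda>s. \<Sum>k<n. surv P Sbot pol s0 (Suc k) s"
  have m0: "0 \<le> ?m" using mu0 by (simp add: sum_nonneg)
  have A: "(\<Sum>k<n. surv P Sbot pol s0 (Suc (Suc k)) s') = (\<Sum>s\<in>UNIV. ?X s * ?c s)"
    by (simp only: surv_SS sum_distrib_right) (rule sum.swap)
  have "?m * (\<Sum>k<Suc n. surv P Sbot pol s0 (Suc k) s') = ?m * (rho s' + (\<Sum>s\<in>UNIV. ?X s * ?c s))"
    by (simp only: sum.lessThan_Suc_shift surv_1[OF pol] A)
  also have "\<dots> = ?m * rho s' + (\<Sum>s\<in>UNIV. (?m * ?X s) * ?c s)"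
    by (simp add: sum_distrib_left algebra_simps)
  also have "\<dots> \<le> ?m * rho s' + (\<Sum>s\<in>UNIV. mu s * ?c s)"
    by (intro add_left_mono sum_mono mult_right_mono Suc.IH) (simp add: K_nonneg[OF pol])
  also have "\<dots> = mu s'" using st[rule_format, of s'] K_split[of mu s'] by linarith
  finally show ?case .
qed

lemma mnu_le:
  assumes mu0: "\<forall>s. 0 \<le> mu s"
    and st: "\<forall>s'. mu s' = (\<Sum>s\<in>UNIV. mu s * kernel_pi P pol s s')"
  shows "(\<Sum>s\<in>Sbot. mu s) * nu s' \<le> mu s'"
proof -
  let ?m = "\<Sum>s\<in>Sbot. mu s"
  have "?m * nu s' = (\<Sum>k. ?m * surv P Sbot pol s0 (Suc k) s')"
    unfolding nu_def by (rule suminf_mult[OF surv_summ, symmetric])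
  also have "\<dots> \<le> mu s'"
  proof (rule suminf_le_const[OF summable_mult[OF surv_summ]])
    fix n show "(\<Sum>k<n. ?m * surv P Sbot pol s0 (Suc k) s') \<le> mu s'"
      using lower[OF mu0 st, where n=n and s'=s'] by (simp add: sum_distrib_left)
  qed
  finally show ?thesis .
qed

end

context elpc
begin

lemma sp_nonneg: "stoch_policy q \<Longrightarrow> 0 \<le> state_prob P q s0 n s"
  by (induction n arbitrary: s) (auto intro!: sum_nonneg mult_nonneg_nonneg K_nonneg)

lemma pos_sum_term: fixes f g :: "'b::finite \<Rightarrow> real" assumes "0 < (\<Sum>x\<in>UNIV. f x * g x)" "\<And>x. 0 \<le> f x" "\<And>x. 0 \<le> g x"
  shows "\<exists>x. 0 < f x \<and> 0 < g x"
proof (rule ccontr)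
  assume neg: "\<not> ?thesis"
  have "f x * g x = 0" for x
  proof (cases "0 < f x")
    case True
    then have "\<not> 0 < g x" using neg by blast
    then have "g x = 0" using assms(3)[of x] by linarith
    then show ?thesis by simp
  next
    case False
    then have "f x = 0" using assms(2)[of x] by linarith
    then show ?thesis by simp
  qed
  then have "(\<Sum>x\<in>UNIV. f x * g x) = 0" by (simp del: mult_eq_0_iff)
  then show False using assms(1) by simp
qed


end

context elpp
begin

lemma no_closed:
  assumes e0: "\<forall>s. 0 \<le> eta s"
    and est: "\<forall>s'. eta s' = (\<Sum>s\<in>UNIV. eta s * kernel_pi P pol s s')"
    and eb: "\<forall>s\<in>Sbot. eta s = 0"
  shows "eta c = 0"
proof (rule ccontr)
  assume "eta c \<noteq> 0"
  then have cpos: "0 < eta c" using e0 by (simp add: less_le)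
  obtain q n where q: "stoch_policy q" and sp: "0 < state_prob P q s0 n c" using reach by blast
  define sig where "sig = (\<lambda>s a. if 0 < eta s then pol s a else (q s a + pol s a) / 2)"
  have sigp: "stoch_policy sig"
    unfolding stoch_policy_def
  proof (intro conjI allI)
    fix s a show "0 \<le> sig s a" using q pol unfolding stoch_policy_def sig_def by auto
  next
    fix s
    show "(\<Sum>a\<in>UNIV. sig s a) = 1"
    proof (cases "0 < eta s")
      case True then show ?thesis using pol unfolding stoch_policy_def sig_def by simp
    next
      case False
      then have "(\<Sum>a\<in>UNIV. sig s a) = ((\<Sum>a\<in>UNIV. q s a) + (\<Sum>a\<in>UNIV. pol s a)) / 2"
        unfolding sig_def by (simp add: sum_divide_distrib[symmetric] sum.distrib)
      then show ?thesis using q pol unfolding stoch_policy_def by simp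
    qed
  qed
  have Kin: "\<And>s s'. 0 < eta s \<Longrightarrow> kernel_pi P sig s s' = kernel_pi P pol s s'"
    unfolding kernel_pi_def sig_def by simp
  have Kout: "\<And>s s'. \<not> 0 < eta s \<Longrightarrow> kernel_pi P q s s' / 2 \<le> kernel_pi P sig s s'"
  proof -
    fix s s' assume "\<not> 0 < eta s"
    then have "kernel_pi P sig s s' = (kernel_pi P q s s' + kernel_pi P pol s s') / 2"
      unfolding kernel_pi_def sig_def
      by (simp add: sum_divide_distrib[symmetric] sum.distrib[symmetric] algebra_simps)
    then show "kernel_pi P q s s' / 2 \<le> kernel_pi P sig s s'" using K_nonneg[OF pol, of s s'] by simp
  qed
  have closed: "\<And>s s'. 0 < eta s \<Longrightarrow> \<not> 0 < eta s' \<Longrightarrow> kernel_pi P pol s s' = 0"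
  proof -
    fix s s' assume a: "0 < eta s" "\<not> 0 < eta s'"
    then have "eta s' = 0" using e0 by (simp add: less_le)
    then have "(\<Sum>x\<in>UNIV. eta x * kernel_pi P pol x s') = 0" using est[rule_format, of s'] by linarith
    then have "\<forall>x\<in>UNIV. eta x * kernel_pi P pol x s' = 0"
      by (subst (asm) sum_nonneg_eq_0_iff) (auto intro!: mult_nonneg_nonneg e0[rule_format] K_nonneg[OF pol])
    then have "eta s * kernel_pi P pol s s' = 0" by blast
    then show "kernel_pi P pol s s' = 0" using a(1) by simp
  qed
  have rows: "\<And>s. 0 < eta s \<Longrightarrow> (\<Sum>s'\<in>UNIV. if 0 < eta s' then kernel_pi P sig s s' else 0) = 1"
  proof -
    fix s assume a: "0 < eta s"
    have "(\<Sum>s'\<in>UNIV. if 0 < eta s' then kernel_pi P sig s s' else 0) = (\<Sum>s'\<in>UNIV. kernel_pi P pol s s')"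
      by (rule sum.cong) (auto simp: Kin a closed)
    then show "?thesis s" using K_sum[OF pol] by simp
  qed
  have notin: "\<And>s. 0 < eta s \<Longrightarrow> s \<notin> Sbot" using eb by force
  define G where "G = (\<exists>m x. 0 < eta x \<and> 0 < surv P Sbot sig s0 (Suc m) x)"
  have ind: "0 < state_prob P q s0 k x \<Longrightarrow> G \<or> x \<in> Sbot \<or> (\<exists>m. 0 < surv P Sbot sig s0 (Suc m) x)" for k x
  proof (induction k arbitrary: x)
    case 0 then show ?case using s0_bot by (simp split: if_splits)
  next
    case (Suc k)
    then have "0 < (\<Sum>y\<in>UNIV. state_prob P q s0 k y * kernel_pi P q y x)" by simp
    then obtain y where y1: "0 < state_prob P q s0 k y" and y2: "0 < kernel_pi P q y x"
      using pos_sum_term[of "\<lambda>y. state_prob P q s0 k y" "\<lambda>y. kernel_pi P q y x"]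
        sp_nonneg[OF q] K_nonneg[OF q] by blast
    from Suc.IH[OF y1] consider "G" | "y \<in> Sbot" | "y \<notin> Sbot" "\<exists>m. 0 < surv P Sbot sig s0 (Suc m) y"
      by blast
    then show ?case
    proof cases
      case 1 then show ?thesis by simp
    next
      case 2
      then have "0 < rho x" using y2 K_bot[OF q] by simp
      then have "0 < surv P Sbot sig s0 (Suc 0) x" using surv_1[OF sigp] by simp
      then show ?thesis by blast
    next
      case 3
      then obtain m where m: "0 < surv P Sbot sig s0 (Suc m) y" by blast
      show ?thesis
      proof (cases "0 < eta y")
        case True then show ?thesis using m G_def by blast
      next
        case False
        then have ky: "0 < kernel_pi P sig y x" using Kout[of y x] y2 by simp
        have "surv P Sbot sig s0 (Suc m) y * (if y \<in> Sbot then 0 else kernel_pi P sig y x) \<le>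
           (\<Sum>s\<in>UNIV. surv P Sbot sig s0 (Suc m) s * (if s \<in> Sbot then 0 else kernel_pi P sig s x))"
          by (rule member_le_sum) (auto intro!: mult_nonneg_nonneg surv_nonneg[OF sigp] K_nonneg[OF sigp])
        then have le: "surv P Sbot sig s0 (Suc m) y * kernel_pi P sig y x \<le>
           (\<Sum>s\<in>UNIV. surv P Sbot sig s0 (Suc m) s * (if s \<in> Sbot then 0 else kernel_pi P sig s x))"
          using 3(1) by simp
        have pp: "0 < surv P Sbot sig s0 (Suc m) y * kernel_pi P sig y x" using m ky by (rule mult_pos_pos)
        have "0 < surv P Sbot sig s0 (Suc (Suc m)) x"
          unfolding surv_SS using le pp by linarith
        then show ?thesis by blast
      qed
    qed
  qed
  have cnot: "c \<notin> Sbot" using cpos eb by force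
  have G using ind[OF sp] cnot cpos unfolding G_def by blast
  then obtain N x where x1: "0 < eta x" and x2: "0 < surv P Sbot sig s0 (Suc N) x"
    unfolding G_def by blast
  define cm where "cm k = (\<Sum>s\<in>UNIV. if 0 < eta s then surv P Sbot sig s0 (Suc k) s else 0)" for k
  have cm_mono: "cm k \<le> cm (Suc k)" for k
  proof -
    let ?S = "\<lambda>s. surv P Sbot sig s0 (Suc k) s"
    have "cm k = (\<Sum>s\<in>UNIV. if 0 < eta s then ?S s * (\<Sum>s'\<in>UNIV. if 0 < eta s' then kernel_pi P sig s s' else 0) else 0)"
      unfolding cm_def by (rule sum.cong) (auto simp: rows)
    also have "\<dots> = (\<Sum>s\<in>UNIV. \<Sum>s'\<in>UNIV. if 0 < eta s' \<and> 0 < eta s then ?S s * kernel_pi P sig s s' else 0)"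
      by (rule sum.cong) (auto simp: sum_distrib_left intro!: sum.cong)
    also have "\<dots> = (\<Sum>s'\<in>UNIV. \<Sum>s\<in>UNIV. if 0 < eta s' \<and> 0 < eta s then ?S s * kernel_pi P sig s s' else 0)"
      by (rule sum.swap)
    also have "\<dots> \<le> (\<Sum>s'\<in>UNIV. if 0 < eta s' then (\<Sum>s\<in>UNIV. ?S s * (if s \<in> Sbot then 0 else kernel_pi P sig s s')) else 0)"
    proof (rule sum_mono)
      fix s' show "(\<Sum>s\<in>UNIV. if 0 < eta s' \<and> 0 < eta s then ?S s * kernel_pi P sig s s' else 0)
         \<le> (if 0 < eta s' then (\<Sum>s\<in>UNIV. ?S s * (if s \<in> Sbot then 0 else kernel_pi P sig s s')) else 0)"
      proof (cases "0 < eta s'")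
        case True then show ?thesis
          by (simp, intro sum_mono) (auto simp: notin intro!: mult_nonneg_nonneg surv_nonneg[OF sigp] K_nonneg[OF sigp])
      qed simp
    qed
    also have "\<dots> = cm (Suc k)" unfolding cm_def by (rule sum.cong) (auto simp: surv_SS)
    finally show ?thesis .
  qed
  have cmN: "0 < cm N"
  proof -
    have "(if 0 < eta x then surv P Sbot sig s0 (Suc N) x else 0) \<le> cm N"
      unfolding cm_def by (rule member_le_sum) (auto intro: surv_nonneg[OF sigp])
    then show ?thesis using x1 x2 by simp
  qed
  have cm_am: "cm k \<le> am sig k" for k
    unfolding cm_def am_def by (rule sum_mono) (auto intro: surv_nonneg[OF sigp])
  have inc: "incseq cm" by (rule incseq_SucI) (rule cm_mono)
  have dec: "decseq (am sig)" by (rule decseq_SucI) (simp add: am_Suc[OF sigp] hm_nonneg[OF sigp])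
  have bnd: "cm N \<le> am sig k" for k
  proof (cases "k \<le> N")
    case True then show ?thesis using decseqD[OF dec True] cm_am[of N] by linarith
  next
    case False then have "N \<le> k" by simp
    then show ?thesis using incseqD[OF inc] cm_am[of k] by (meson order_trans)
  qed
  have "suminf (hm sig) \<le> 1 - cm N"
  proof (rule suminf_le_const[OF hm_facts(2)[OF sigp]])
    fix k show "sum (hm sig) {..<k} \<le> 1 - cm N" using am_partial[OF sigp, of k] bnd[of k] by simp
  qed
  then show False using hm_facts(3)[OF sigp] cmN by simp
qed

end


context elpp
begin

lemma unique:
  assumes mu0: "\<forall>s. 0 \<le> mu s" and mu1: "(\<Sum>s\<in>UNIV. mu s) = 1"
    and st: "\<forall>s'. mu s' = (\<Sum>s\<in>UNIV. mu s * kernel_pi P pol s s')"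
  shows "mu = (\<lambda>s. nu s / ET)"
proof -
  define m where "m = (\<Sum>s\<in>Sbot. mu s)"
  define eta where "eta s = mu s - m * nu s" for s
  have e0: "\<forall>s. 0 \<le> eta s" using mnu_le[OF mu0 st] unfolding eta_def m_def by simp
  have est: "\<forall>s'. eta s' = (\<Sum>s\<in>UNIV. eta s * kernel_pi P pol s s')"
  proof
    fix s'
    have "(\<Sum>s\<in>UNIV. eta s * kernel_pi P pol s s') =
        (\<Sum>s\<in>UNIV. mu s * kernel_pi P pol s s') - m * (\<Sum>s\<in>UNIV. nu s * kernel_pi P pol s s')"
      unfolding eta_def by (simp add: left_diff_distrib sum_subtractf sum_distrib_left mult.assoc)
    also have "\<dots> = mu s' - m * nu s'" using st[rule_format, of s'] nu_stat[of s'] by simp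
    finally show "eta s' = (\<Sum>s\<in>UNIV. eta s * kernel_pi P pol s s')" unfolding eta_def by simp
  qed
  have ebs: "(\<Sum>s\<in>Sbot. eta s) = 0"
    unfolding eta_def using nu_bot by (simp add: sum_subtractf m_def[symmetric] sum_distrib_left[symmetric])
  have eb: "\<forall>s\<in>Sbot. eta s = 0"
    using ebs sum_nonneg_eq_0_iff[of Sbot eta] e0 by auto
  have ez: "eta s = 0" for s by (rule no_closed[OF e0 est eb])
  then have mus: "mu s = m * nu s" for s unfolding eta_def by (simp add: algebra_simps)
  have "1 = m * ET" using mu1 nu_total by (simp add: mus sum_distrib_left[symmetric])
  then have "m = 1 / ET" using ET_ge1 by (simp add: field_simps)
  then show ?thesis using mus by (auto simp: fun_eq_iff)
qed

lemma stat_eq: "stat_dist P pol = (\<lambda>s. nu s / ET)"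
  unfolding stat_dist_def
proof (rule the_equality)
  have ETp: "0 < ET" using ET_ge1 by simp
  show "(\<forall>s. 0 \<le> nu s / ET) \<and> (\<Sum>s\<in>UNIV. nu s / ET) = 1 \<and>
      (\<forall>s'. nu s' / ET = (\<Sum>s\<in>UNIV. nu s / ET * kernel_pi P pol s s'))"
  proof (intro conjI allI)
    fix s show "0 \<le> nu s / ET" using nu_nonneg ETp by simp
  next
    show "(\<Sum>s\<in>UNIV. nu s / ET) = 1" using nu_total ETp by (simp add: sum_divide_distrib[symmetric])
  next
    fix s'
    have "(\<Sum>s\<in>UNIV. nu s / ET * kernel_pi P pol s s') = (\<Sum>s\<in>UNIV. nu s * kernel_pi P pol s s') / ET"
      by (simp add: sum_divide_distrib)
    then show "nu s' / ET = (\<Sum>s\<in>UNIV. nu s / ET * kernel_pi P pol s s')" using nu_stat[of s'] by simp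
  qed
next
  fix d assume a: "(\<forall>s. 0 \<le> d s) \<and> (\<Sum>s\<in>UNIV. d s) = 1 \<and> (\<forall>s'. d s' = (\<Sum>s\<in>UNIV. d s * kernel_pi P pol s s'))"
  show "d = (\<lambda>s. nu s / ET)" using a by (elim conjE) (rule unique)
qed

lemma lagr_formula:
  "lagr P R Sbot s0 pol Qb (\<lambda>s a. stat_dist P pol s * pol s a * ET) =
    (\<Sum>s\<in>UNIV. nu s * R s) + (\<Sum>s\<in>UNIV. if s \<in> Sbot then 0 else nu s * (Max (range (Qb s)) - (\<Sum>a\<in>UNIV. pol s a * Qb s a)))"
proof -
  have ETp: "0 < ET" using ET_ge1 by simp
  have lam: "(\<lambda>s a. stat_dist P pol s * pol s a * ET) = (\<lambda>s a. nu s * pol s a)"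
    using ETp by (simp add: stat_eq fun_eq_iff)
  define f where "f s' = R s' + (if s' \<notin> Sbot then Max (range (Qb s')) else 0)" for s'
  define V where "V s = (\<Sum>a\<in>UNIV. pol s a * Qb s a)" for s
  have B: "(\<Sum>s\<in>UNIV. \<Sum>a\<in>UNIV. nu s * pol s a * bellman P R Sbot Qb s a) = (\<Sum>s'\<in>UNIV. nu s' * f s')"
  proof -
    have "(\<Sum>s\<in>UNIV. \<Sum>a\<in>UNIV. nu s * pol s a * bellman P R Sbot Qb s a) =
        (\<Sum>s\<in>UNIV. \<Sum>a\<in>UNIV. \<Sum>s'\<in>UNIV. nu s * (P s a s' * pol s a) * f s')"
      unfolding bellman_def f_def by (simp add: sum_distrib_left mult_ac)
    also have "\<dots> = (\<Sum>s\<in>UNIV. \<Sum>s'\<in>UNIV. \<Sum>a\<in>UNIV. nu s * (P s a s' * pol s a) * f s')"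
      by (rule sum.cong[OF refl]) (rule sum.swap)
    also have "\<dots> = (\<Sum>s'\<in>UNIV. \<Sum>s\<in>UNIV. \<Sum>a\<in>UNIV. nu s * (P s a s' * pol s a) * f s')"
      by (rule sum.swap)
    also have "\<dots> = (\<Sum>s'\<in>UNIV. (\<Sum>s\<in>UNIV. nu s * kernel_pi P pol s s') * f s')"
      unfolding kernel_pi_def by (simp add: sum_distrib_left sum_distrib_right)
    also have "\<dots> = (\<Sum>s'\<in>UNIV. nu s' * f s')"
      by (rule sum.cong[OF refl]) (simp only: nu_stat[symmetric])
    finally show ?thesis .
  qed
  have D: "(\<Sum>s\<in>UNIV. \<Sum>a\<in>UNIV. nu s * pol s a * (bellman P R Sbot Qb s a - Qb s a)) =
      (\<Sum>s\<in>UNIV. \<Sum>a\<in>UNIV. nu s * pol s a * bellman P R Sbot Qb s a) - (\<Sum>s\<in>UNIV. nu s * V s)"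
    unfolding V_def by (simp add: right_diff_distrib sum_subtractf sum_distrib_left mult_ac)
  have "lagr P R Sbot s0 pol Qb (\<lambda>s a. stat_dist P pol s * pol s a * ET) =
     (\<Sum>s\<in>UNIV. if s \<in> Sbot then nu s * V s else 0) + ((\<Sum>s'\<in>UNIV. nu s' * f s') - (\<Sum>s\<in>UNIV. nu s * V s))"
    unfolding lagr_def lam expQ V_def[symmetric] using B D by simp
  also have "\<dots> = (\<Sum>s\<in>UNIV. (if s \<in> Sbot then nu s * V s else 0) + nu s * f s - nu s * V s)"
    by (simp add: sum.distrib sum_subtractf)
  also have "\<dots> = (\<Sum>s\<in>UNIV. nu s * R s + (if s \<in> Sbot then 0 else nu s * (Max (range (Qb s)) - V s)))"
    by (rule sum.cong) (auto simp: f_def algebra_simps)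
  also have "\<dots> = (\<Sum>s\<in>UNIV. nu s * R s) + (\<Sum>s\<in>UNIV. if s \<in> Sbot then 0 else nu s * (Max (range (Qb s)) - V s))"
    by (rule sum.distrib)
  finally show ?thesis unfolding V_def .
qed

end


theorem mainTheorem7:
  fixes P :: "'s::finite \<Rightarrow> 'a::finite \<Rightarrow> 's \<Rightarrow> real"
    and R :: "'s \<Rightarrow> real" and rho :: "'s \<Rightarrow> real" and Sbot :: "'s set" and s0 :: 's
    and Q :: "'s \<Rightarrow> 'a \<Rightarrow> real" and pol :: "'s \<Rightarrow> 'a \<Rightarrow> real"
  assumes "elp P rho Sbot s0"
    and "stoch_policy pol"
  defines "rho_pi \<equiv> (\<lambda>s a. stat_dist P pol s * pol s a)"
  defines "lam_pi \<equiv> (\<lambda>s a. rho_pi s a * exp_T P Sbot pol s0)"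
  shows "(\<forall>Qb lb. (\<forall>s a. 0 \<le> lb s a) \<longrightarrow>
            lagr P R Sbot s0 pol Q lb \<le> lagr P R Sbot s0 pol Q lam_pi \<and>
            lagr P R Sbot s0 pol Q lam_pi \<le> lagr P R Sbot s0 pol Qb lam_pi)
     \<longleftrightarrow>
         ((\<forall>s a. bellman P R Sbot Q s a - Q s a \<le> 0) \<and>
          (\<forall>s a. rho_pi s a * (bellman P R Sbot Q s a - Q s a) = 0) \<and>
          (\<forall>s a. s \<notin> Sbot \<longrightarrow> rho_pi s a * (Max (range (Q s)) - Q s a) = 0))"
proof -
  interpret elpp P rho Sbot s0 pol
    by unfold_locales (use assms(1,2) in auto)
  have ETp: "0 < ET" using ET_ge1 by simp
  have pol0: "0 \<le> pol s a" for s a using assms(2) unfolding stoch_policy_def by auto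
  have pol1: "(\<Sum>a\<in>UNIV. pol s a) = 1" for s using assms(2) unfolding stoch_policy_def by auto
  have rho_eq: "rho_pi s a = nu s / ET * pol s a" for s a unfolding rho_pi_def stat_eq ..
  have lam_eq: "lam_pi s a = nu s * pol s a" for s a unfolding lam_pi_def rho_eq using ETp by simp
  have lam0: "0 \<le> lam_pi s a" for s a unfolding lam_eq using nu_nonneg pol0 by simp
  define D where "D s a = bellman P R Sbot Q s a - Q s a" for s a
  have lagrQ: "lagr P R Sbot s0 pol Q lb = exp_Q_T P Sbot pol s0 Q + (\<Sum>s\<in>UNIV. \<Sum>a\<in>UNIV. lb s a * D s a)" for lb
    unfolding lagr_def D_def ..
  define Y where "Y Qb s = (if s \<in> Sbot then 0 else nu s * (Max (range (Qb s)) - (\<Sum>a\<in>UNIV. pol s a * Qb s a)))"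
    for Qb :: "'s \<Rightarrow> 'a \<Rightarrow> real" and s
  have LF: "lagr P R Sbot s0 pol Qb lam_pi = (\<Sum>s\<in>UNIV. nu s * R s) + (\<Sum>s\<in>UNIV. Y Qb s)" for Qb
  proof -
    have "lam_pi = (\<lambda>s a. stat_dist P pol s * pol s a * ET)" unfolding lam_pi_def rho_pi_def ..
    then show ?thesis unfolding Y_def using lagr_formula[of R Qb] by simp
  qed
  have Mge: "Qb s a \<le> Max (range (Qb s))" for Qb :: "'s \<Rightarrow> 'a \<Rightarrow> real" and s a
    by (rule Max_ge) auto
  have Yterm: "Y Qb s = (\<Sum>a\<in>UNIV. if s \<in> Sbot then 0 else nu s * pol s a * (Max (range (Qb s)) - Qb s a))" for Qb s
  proof (cases "s \<in> Sbot")
    case True then show ?thesis unfolding Y_def by simp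
  next
    case False
    have "(\<Sum>a\<in>UNIV. nu s * pol s a * (Max (range (Qb s)) - Qb s a)) =
        nu s * (Max (range (Qb s)) * (\<Sum>a\<in>UNIV. pol s a) - (\<Sum>a\<in>UNIV. pol s a * Qb s a))"
      by (simp add: sum_distrib_left sum_distrib_right right_diff_distrib sum_subtractf mult_ac)
    then show ?thesis using False unfolding Y_def by (simp add: pol1)
  qed
  have Yt0: "0 \<le> (if s \<in> Sbot then 0 else nu s * pol s a * (Max (range (Qb s)) - Qb s a))" for Qb s a
    using nu_nonneg[of s] pol0[of s a] Mge[of Qb s a] by simp
  have Y0: "0 \<le> Y Qb s" for Qb s unfolding Yterm by (rule sum_nonneg) (rule Yt0)
  have Yzero: "Y (\<lambda>_ _. 0) s = 0" for s unfolding Y_def by simp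
  show ?thesis
  proof
    assume L: "\<forall>Qb lb. (\<forall>s a. 0 \<le> lb s a) \<longrightarrow>
            lagr P R Sbot s0 pol Q lb \<le> lagr P R Sbot s0 pol Q lam_pi \<and>
            lagr P R Sbot s0 pol Q lam_pi \<le> lagr P R Sbot s0 pol Qb lam_pi"
    have L1: "lagr P R Sbot s0 pol Q lb \<le> lagr P R Sbot s0 pol Q lam_pi" if "\<forall>s a. 0 \<le> lb s a" for lb
      using L that by blast
    have L2: "lagr P R Sbot s0 pol Q lam_pi \<le> lagr P R Sbot s0 pol Qb lam_pi" for Qb
      using L[rule_format, of "\<lambda>_ _. 0" Qb] by simp
    have c1: "\<forall>s a. D s a \<le> 0"
    proof (intro allI, rule ccontr)
      fix s a assume "\<not> D s a \<le> 0"
      then have dpos: "0 < D s a" by simp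
      define C where "C = lagr P R Sbot s0 pol Q lam_pi - exp_Q_T P Sbot pol s0 Q"
      define M where "M = (\<bar>C\<bar> + 1) / D s a"
      have M0: "0 \<le> M" unfolding M_def using dpos by simp
      define lb where "lb x y = (if x = s \<and> y = a then M else 0)" for x y
      have lb0: "\<forall>x y. 0 \<le> lb x y" unfolding lb_def using M0 by simp
      have eqt: "lb x y * D x y = (if x = s then (if y = a then M * D s a else 0) else 0)" for x y
        unfolding lb_def by auto
      have "(\<Sum>x\<in>UNIV. \<Sum>y\<in>UNIV. lb x y * D x y) = (\<Sum>x\<in>UNIV. if x = s then M * D s a else 0)"
        by (rule sum.cong[OF refl]) (case_tac "x = s"; simp add: eqt)
      also have "\<dots> = M * D s a" by simp
      finally have "lagr P R Sbot s0 pol Q lb = exp_Q_T P Sbot pol s0 Q + M * D s a" unfolding lagrQ by simp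
      moreover have "M * D s a = \<bar>C\<bar> + 1" unfolding M_def using dpos by simp
      ultimately show False using L1[OF lb0] unfolding C_def by linarith
    qed
    have c2: "\<forall>s a. rho_pi s a * D s a = 0"
    proof -
      let ?T = "\<lambda>s a. - (lam_pi s a * D s a)"
      have T0: "0 \<le> ?T s a" for s a using lam0[of s a] c1 by (simp add: mult_nonneg_nonpos)
      have "lagr P R Sbot s0 pol Q (\<lambda>_ _. 0) \<le> lagr P R Sbot s0 pol Q lam_pi" by (rule L1) simp
      then have "0 \<le> (\<Sum>s\<in>UNIV. \<Sum>a\<in>UNIV. lam_pi s a * D s a)" unfolding lagrQ by simp
      then have "(\<Sum>s\<in>UNIV. \<Sum>a\<in>UNIV. ?T s a) \<le> 0" by (simp add: sum_negf)
      moreover have "0 \<le> (\<Sum>s\<in>UNIV. \<Sum>a\<in>UNIV. ?T s a)" by (intro sum_nonneg T0)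
      ultimately have "(\<Sum>s\<in>UNIV. \<Sum>a\<in>UNIV. ?T s a) = 0" by linarith
      then have "\<forall>s\<in>UNIV. (\<Sum>a\<in>UNIV. ?T s a) = 0"
        by (subst (asm) sum_nonneg_eq_0_iff) (auto intro!: sum_nonneg T0)
      then have "\<forall>s. \<forall>a\<in>UNIV. ?T s a = 0"
      proof (intro allI)
        fix s assume h: "\<forall>s\<in>UNIV. (\<Sum>a\<in>UNIV. ?T s a) = 0"
        have "(\<Sum>a\<in>UNIV. ?T s a) = 0" using h by blast
        moreover have "\<forall>a\<in>UNIV. 0 \<le> ?T s a" using T0 by blast
        ultimately show "\<forall>a\<in>UNIV. ?T s a = 0" using sum_nonneg_eq_0_iff[of UNIV "?T s"] finite_UNIV by blast
      qed
      then have "lam_pi s a * D s a = 0" for s a by simp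
      then show ?thesis unfolding lam_pi_def using ETp by simp
    qed
    have c3: "\<forall>s a. s \<notin> Sbot \<longrightarrow> rho_pi s a * (Max (range (Q s)) - Q s a) = 0"
    proof (intro allI impI)
      fix s a assume sn: "s \<notin> Sbot"
      have "lagr P R Sbot s0 pol Q lam_pi \<le> lagr P R Sbot s0 pol (\<lambda>_ _. 0) lam_pi" by (rule L2)
      then have "(\<Sum>s\<in>UNIV. Y Q s) \<le> 0" unfolding LF by (simp add: Yzero)
      moreover have "0 \<le> (\<Sum>s\<in>UNIV. Y Q s)" by (intro sum_nonneg Y0)
      ultimately have "(\<Sum>s\<in>UNIV. Y Q s) = 0" by linarith
      then have "Y Q s = 0" using sum_nonneg_eq_0_iff[of UNIV "Y Q"] Y0 finite_UNIV by blast
      then have "(\<Sum>a\<in>UNIV. if s \<in> Sbot then 0 else nu s * pol s a * (Max (range (Q s)) - Q s a)) = 0"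
        unfolding Yterm .
      moreover have "\<forall>a\<in>UNIV. 0 \<le> (if s \<in> Sbot then 0 else nu s * pol s a * (Max (range (Q s)) - Q s a))"
        using Yt0 by blast
      ultimately have "\<forall>a\<in>UNIV. (if s \<in> Sbot then 0 else nu s * pol s a * (Max (range (Q s)) - Q s a)) = 0"
        using sum_nonneg_eq_0_iff[of UNIV "\<lambda>a. if s \<in> Sbot then 0 else nu s * pol s a * (Max (range (Q s)) - Q s a)"] finite_UNIV by blast
      then have "(if s \<in> Sbot then 0 else nu s * pol s a * (Max (range (Q s)) - Q s a)) = 0" by blast
      then have "nu s * pol s a * (Max (range (Q s)) - Q s a) = 0" using sn by (simp only: if_False)
      then show "rho_pi s a * (Max (range (Q s)) - Q s a) = 0" unfolding rho_eq by simp
    qed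
    show "(\<forall>s a. bellman P R Sbot Q s a - Q s a \<le> 0) \<and>
          (\<forall>s a. rho_pi s a * (bellman P R Sbot Q s a - Q s a) = 0) \<and>
          (\<forall>s a. s \<notin> Sbot \<longrightarrow> rho_pi s a * (Max (range (Q s)) - Q s a) = 0)"
      using c1 c2 c3 unfolding D_def by blast
  next
    assume Rh: "(\<forall>s a. bellman P R Sbot Q s a - Q s a \<le> 0) \<and>
          (\<forall>s a. rho_pi s a * (bellman P R Sbot Q s a - Q s a) = 0) \<and>
          (\<forall>s a. s \<notin> Sbot \<longrightarrow> rho_pi s a * (Max (range (Q s)) - Q s a) = 0)"
    have r1: "D s a \<le> 0" for s a using Rh unfolding D_def by blast
    have r2: "rho_pi s a * D s a = 0" for s a using Rh unfolding D_def by blast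
    have r3: "s \<notin> Sbot \<Longrightarrow> rho_pi s a * (Max (range (Q s)) - Q s a) = 0" for s a using Rh by blast
    have Dz: "(\<Sum>s\<in>UNIV. \<Sum>a\<in>UNIV. lam_pi s a * D s a) = 0"
    proof -
      have eq: "lam_pi s a * D s a = (rho_pi s a * D s a) * ET" for s a unfolding lam_pi_def by (simp only: mult_ac)
      have z: "lam_pi s a * D s a = 0" for s a unfolding eq r2 by simp
      show ?thesis by (simp only: z sum.neutral_const)
    qed
    have Yz: "Y Q s = 0" for s
    proof -
      have "(if s \<in> Sbot then 0 else nu s * pol s a * (Max (range (Q s)) - Q s a)) = 0" for a
      proof (cases "s \<in> Sbot")
        case False
        have "nu s * pol s a * (Max (range (Q s)) - Q s a) = (rho_pi s a * (Max (range (Q s)) - Q s a)) * ET"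
          unfolding rho_eq using ETp by simp
        then show ?thesis using r3[OF False, of a] False by simp
      qed simp
      then show ?thesis unfolding Yterm by simp
    qed
    show "\<forall>Qb lb. (\<forall>s a. 0 \<le> lb s a) \<longrightarrow>
            lagr P R Sbot s0 pol Q lb \<le> lagr P R Sbot s0 pol Q lam_pi \<and>
            lagr P R Sbot s0 pol Q lam_pi \<le> lagr P R Sbot s0 pol Qb lam_pi"
    proof (intro allI impI conjI)
      fix Qb :: "'s \<Rightarrow> 'a \<Rightarrow> real" and lb :: "'s \<Rightarrow> 'a \<Rightarrow> real"
      assume lb0: "\<forall>s a. 0 \<le> lb s a"
      have "(\<Sum>s\<in>UNIV. \<Sum>a\<in>UNIV. lb s a * D s a) \<le> 0"
        by (intro sum_nonpos mult_nonneg_nonpos) (use lb0 r1 in auto)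
      then show "lagr P R Sbot s0 pol Q lb \<le> lagr P R Sbot s0 pol Q lam_pi" unfolding lagrQ Dz by simp
      have "lagr P R Sbot s0 pol Q lam_pi = (\<Sum>s\<in>UNIV. nu s * R s)" unfolding LF Yz by simp
      also have "\<dots> \<le> (\<Sum>s\<in>UNIV. nu s * R s) + (\<Sum>s\<in>UNIV. Y Qb s)" using sum_nonneg[of UNIV "Y Qb"] Y0 by simp
      finally show "lagr P R Sbot s0 pol Q lam_pi \<le> lagr P R Sbot s0 pol Qb lam_pi" unfolding LF .
    qed
  qed
qed


end
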